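(* Let $(X,\Sigma)$ be a test space with $X$ finite, and let $\mathrm{Pl}:E(X,\Sigma)\to D$ be a plausibility measure on it. Then the following are equivalent: (a) $\mathrm{Pl}$ agrees with some probability measure $\mu$ on $(X,\Sigma)$, meaning that for all events $A,B$ we have $\mathrm{Pl}(A)\preceq\mathrm{Pl}(B)$ if and only if $\mu(A)\le\mu(B)$; (b) the image of $\mathrm{Pl}$ is totally ordered by $\preceq$ and $\mathrm{Pl}$ is Archimedean.
   Context: A test space $(X,\Sigma)$ is a set $X$ of outcomes together with a set $\Sigma\subseteq 2^X$ of subsets (called tests) with $\bigcup_{T\in\Sigma}T=X$. An event is a subset of $X$ that is contained in some test, and $E(X,\Sigma)$ denotes the set of all events. A probability measure on $(X,\Sigma)$ is a function $\mu:X\to\mathbb{R}_{\ge0}$ with $\sum_{x\in T}\mu(x)=1$ for every $T\in\Sigma$. It is extended to events by $\mu(A)=\sum_{x\in A}\mu(x)$. A plausibility measure is a function $\mathrm{Pl}:E(X,\Sigma)\to D$, where $(D,\preceq)$ is a partially ordered set, satisfying three conditions: (i) $\mathrm{Pl}(T)=\mathrm{Pl}(R)$ for all $T,R\in\Sigma$; (ii) $A\subseteq B$ implies $\mathrm{Pl}(A)\preceq\mathrm{Pl}(B)$; (iii) $\mathrm{Pl}(\emptyset)\prec\mathrm{Pl}(T)$ for every $T\in\Sigma$. Here $a\prec b$ means $a\preceq b$ and $b\not\preceq a$. $\mathrm{Pl}$ is Archimedean if the following holds for every $n\ge1$ and every pair of finite families of events $(A_1,\dots,A_n)$ and $(B_1,\dots,B_n)$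 such that each outcome $x\in X$ belongs to the same number of the $A_i$ as of the $B_i$ (counted with multiplicity): whenever $\mathrm{Pl}(A_i)\preceq\mathrm{Pl}(B_i)$ for all $i=1,\dots,n-1$, then $\mathrm{Pl}(A_n)\succeq\mathrm{Pl}(B_n)$. *)

theory Defs
  imports Complex_Main
begin

definition test_space :: "'a set \<Rightarrow> 'a set set \<Rightarrow> bool" where
  "test_space X \<Sigma> \<longleftrightarrow> \<Sigma> \<subseteq> Pow X \<and> \<Union>\<Sigma> = X"

definition events :: "'a set \<Rightarrow> 'a set set \<Rightarrow> 'a set set" where
  "events X \<Sigma> = {A. A \<subseteq> X \<and> (\<exists>T\<in>\<Sigma>. A \<subseteq> T)}"

text \<open>Probability measure, given by its weights on outcomes; extended to events by summation.\<close>
definition prob_measure :: "'a set \<Rightarrow> 'a set set \<Rightarrow> ('a \<Rightarrow> real) \<Rightarrow> bool" where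
  "prob_measure X \<Sigma> \<mu> \<longleftrightarrow> (\<forall>x\<in>X. \<mu> x \<ge> 0) \<and> (\<forall>T\<in>\<Sigma>. (\<Sum>x\<in>T. \<mu> x) = 1)"

text \<open>Plausibility measure with values in a partially ordered type 'd (only its values
  on events matter).\<close>
definition plausibility :: "'a set \<Rightarrow> 'a set set \<Rightarrow> ('a set \<Rightarrow> 'd::order) \<Rightarrow> bool" where
  "plausibility X \<Sigma> Pl \<longleftrightarrow>
     (\<forall>T\<in>\<Sigma>. \<forall>R\<in>\<Sigma>. Pl T = Pl R) \<and>
     (\<forall>A\<in>events X \<Sigma>. \<forall>B\<in>events X \<Sigma>. A \<subseteq> B \<longrightarrow> Pl A \<le> Pl B) \<and>
     (\<forall>T\<in>\<Sigma>. Pl {} < Pl T)"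

definition archimedean :: "'a set \<Rightarrow> 'a set set \<Rightarrow> ('a set \<Rightarrow> 'd::order) \<Rightarrow> bool" where
  "archimedean X \<Sigma> Pl \<longleftrightarrow>
     (\<forall>n::nat. \<forall>A B :: nat \<Rightarrow> 'a set.
        n \<ge> 1 \<and>
        (\<forall>i\<in>{1..n}. A i \<in> events X \<Sigma> \<and> B i \<in> events X \<Sigma>) \<and>
        (\<forall>x\<in>X. card {i\<in>{1..n}. x \<in> A i} = card {i\<in>{1..n}. x \<in> B i}) \<and>
        (\<forall>i\<in>{1..<n}. Pl (A i) \<le> Pl (B i))
        \<longrightarrow> Pl (B n) \<le> Pl (A n))"

definition agrees_with :: "'a set \<Rightarrow> 'a set set \<Rightarrow> ('a set \<Rightarrow> 'd::order) \<Rightarrow> ('a \<Rightarrow> real) \<Rightarrow> bool" where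
  "agrees_with X \<Sigma> Pl \<mu> \<longleftrightarrow>
     (\<forall>A\<in>events X \<Sigma>. \<forall>B\<in>events X \<Sigma>. Pl A \<le> Pl B \<longleftrightarrow> (\<Sum>x\<in>A. \<mu> x) \<le> (\<Sum>x\<in>B. \<mu> x))"

end

theory Submission
  imports Defs
begin


definition ip :: "'x set \<Rightarrow> ('x \<Rightarrow> int) \<Rightarrow> ('x \<Rightarrow> real) \<Rightarrow> real" where
  "ip X a \<mu> = (\<Sum>x\<in>X. of_int (a x) * \<mu> x)"

definition sat :: "'x set \<Rightarrow> (('x \<Rightarrow> int) \<times> bool) set \<Rightarrow> ('x \<Rightarrow> real) \<Rightarrow> bool" where
  "sat X J \<mu> \<longleftrightarrow> (\<forall>j\<in>J. if snd j then 0 < ip X (fst j) \<mu> else 0 \<le> ip X (fst j) \<mu>)"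

inductive_set deriv :: "(('x \<Rightarrow> int) \<times> bool) set \<Rightarrow> (('x \<Rightarrow> int) \<times> bool) set"
  for J where
  base: "j \<in> J \<Longrightarrow> j \<in> deriv J"
| add: "(a,s) \<in> deriv J \<Longrightarrow> (b,t) \<in> deriv J \<Longrightarrow> (\<lambda>x. a x + b x, s \<or> t) \<in> deriv J"
| scale: "(a,s) \<in> deriv J \<Longrightarrow> (k::int) > 0 \<Longrightarrow> (\<lambda>x. k * a x, s) \<in> deriv J"

lemma deriv_mono: assumes "J' \<subseteq> deriv J" shows "deriv J' \<subseteq> deriv J"
proof
  fix j assume "j \<in> deriv J'"
  then show "j \<in> deriv J"
    by (induction rule: deriv.induct) (auto intro: deriv.intros assms[THEN subsetD])
qed

lemma deriv_zero: "j' \<in> deriv J \<Longrightarrow> \<forall>j\<in>J. fst j x0 = 0 \<Longrightarrow> fst j' x0 = 0"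
  by (induction rule: deriv.induct) auto

lemma deriv_comb:
  assumes "p \<in> J" "q \<in> J" "k1 > 0" "k2 > 0"
  shows "(\<lambda>x. k1 * fst p x + k2 * fst q x, snd p \<or> snd q) \<in> deriv J"
proof -
  have "(fst p, snd p) \<in> deriv J" "(fst q, snd q) \<in> deriv J" using assms by (auto intro: deriv.base)
  from deriv.add[OF deriv.scale[OF this(1) assms(3)] deriv.scale[OF this(2) assms(4)]]
  show ?thesis .
qed

lemma sum_concat_rep: "(\<Sum>p\<leftarrow>concat (replicate m ps). (f p::int)) = of_nat m * (\<Sum>p\<leftarrow>ps. f p)"
  by (induction m) (auto simp: algebra_simps)

lemma last_concat_rep: "ps \<noteq> [] \<Longrightarrow> m > 0 \<Longrightarrow> last (concat (replicate m ps)) = last ps"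
  by (induction m) (auto simp: last_append)

lemma deriv_list: "j' \<in> deriv J \<Longrightarrow>
  \<exists>ps. ps \<noteq> [] \<and> set ps \<subseteq> J \<and> (\<forall>x. fst j' x = (\<Sum>p\<leftarrow>ps. fst p x)) \<and> (snd j' \<longrightarrow> snd (last ps))"
proof (induction rule: deriv.induct)
  case (base j)
  then show ?case by (intro exI[of _ "[j]"]) auto
next
  case (add a s b t)
  from add.IH obtain ps qs where ps: "ps \<noteq> []" "set ps \<subseteq> J" "\<forall>x. a x = (\<Sum>p\<leftarrow>ps. fst p x)" "s \<longrightarrow> snd (last ps)"
    and qs: "qs \<noteq> []" "set qs \<subseteq> J" "\<forall>x. b x = (\<Sum>p\<leftarrow>qs. fst p x)" "t \<longrightarrow> snd (last qs)"
    by auto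
  show ?case
  proof (cases t)
    case True
    then show ?thesis using ps qs by (intro exI[of _ "ps @ qs"]) auto
  next
    case False
    then show ?thesis using ps qs by (intro exI[of _ "qs @ ps"]) auto
  qed
next
  case (scale a s k)
  from scale.IH obtain ps where ps: "ps \<noteq> []" "set ps \<subseteq> J" "\<forall>x. a x = (\<Sum>p\<leftarrow>ps. fst p x)" "s \<longrightarrow> snd (last ps)"
    by auto
  have k: "nat k > 0" using scale.hyps by simp
  show ?case
    using ps k scale.hyps
    by (intro exI[of _ "concat (replicate (nat k) ps)"])
       (auto simp: sum_concat_rep last_concat_rep)
qed

lemma list_preimage: "set ps \<subseteq> f ` S \<Longrightarrow> \<exists>qs. set qs \<subseteq> S \<and> ps = map f qs"
proof (induction ps)
  case Nil show ?case by simp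
next
  case (Cons p ps)
  then obtain qs where "set qs \<subseteq> S" "ps = map f qs" by auto
  moreover from Cons.prems obtain q where "q\<in>S" "p = f q" by auto
  ultimately show ?case by (intro exI[of _ "q#qs"]) auto
qed

lemma sum_ind_filter: "(\<Sum>q\<leftarrow>qs. if P q then 1 else 0 :: int) = int (length (filter P qs))"
  by (induction qs) auto



lemma choose_t:
  fixes \<alpha> r :: "'j \<Rightarrow> real" and s :: "'j \<Rightarrow> bool"
  assumes fin: "finite J"
  and pair: "\<And>p q. p\<in>J \<Longrightarrow> q\<in>J \<Longrightarrow> \<alpha> p > 0 \<Longrightarrow> \<alpha> q < 0 \<Longrightarrow>
     (if s p \<or> s q then 0 < (- \<alpha> q) * r p + \<alpha> p * r q else 0 \<le> (- \<alpha> q) * r p + \<alpha> p * r q)"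
  shows "\<exists>t. \<forall>j\<in>J. \<alpha> j \<noteq> 0 \<longrightarrow> (if s j then 0 < \<alpha> j * t + r j else 0 \<le> \<alpha> j * t + r j)"
proof -
  define P where "P = {j\<in>J. \<alpha> j > 0}"
  define N where "N = {j\<in>J. \<alpha> j < 0}"
  define L where "L j = - r j / \<alpha> j" for j
  define U where "U j = r j / (- \<alpha> j)" for j
  have finP: "finite P" and finN: "finite N" using fin by (auto simp: P_def N_def)
  have Lp: "(0 < \<alpha> p * t + r p \<longleftrightarrow> L p < t) \<and> (0 \<le> \<alpha> p * t + r p \<longleftrightarrow> L p \<le> t)" if "\<alpha> p > 0" for p t
    using that unfolding L_def by (auto simp: field_simps)
  have Uq: "(0 < \<alpha> q * t + r q \<longleftrightarrow> t < U q) \<and> (0 \<le> \<alpha> q * t + r q \<longleftrightarrow> t \<le> U q)" if "\<alpha> q < 0" for q t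
    using that unfolding U_def by (auto simp: field_simps)
  have PN: "(s p \<or> s q \<longrightarrow> L p < U q) \<and> L p \<le> U q" if "p \<in> P" "q \<in> N" for p q
  proof -
    have a: "\<alpha> p > 0" "\<alpha> q < 0" "p \<in> J" "q \<in> J" using that by (auto simp: P_def N_def)
    have e: "L p < U q \<longleftrightarrow> 0 < (- \<alpha> q) * r p + \<alpha> p * r q"
            "L p \<le> U q \<longleftrightarrow> 0 \<le> (- \<alpha> q) * r p + \<alpha> p * r q"
      using a unfolding L_def U_def by (auto simp: field_simps)
    show ?thesis using pair[OF a(3,4,1,2)] e by (auto split: if_splits)
  qed
  define G where "G t \<longleftrightarrow> (\<forall>p\<in>P. (s p \<longrightarrow> L p < t) \<and> L p \<le> t) \<and> (\<forall>q\<in>N. (s q \<longrightarrow> t < U q) \<and> t \<le> U q)" for t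
  have "\<exists>t. G t"
  proof (cases "P = {}")
    case True
    show ?thesis
    proof (cases "N = {}")
      case True
      then show ?thesis using \<open>P = {}\<close> by (auto simp: G_def)
    next
      case False
      have "\<forall>q\<in>N. Min (U ` N) \<le> U q" using finN by auto
      then have "G (Min (U ` N) - 1)" using \<open>P = {}\<close> by (force simp: G_def)
      then show ?thesis ..
    qed
  next
    case False
    show ?thesis
    proof (cases "N = {}")
      case True
      have "\<forall>p\<in>P. L p \<le> Max (L ` P)" using finP by auto
      then have "G (Max (L ` P) + 1)" using \<open>N = {}\<close> by (force simp: G_def)
      then show ?thesis ..
    next
      case NF: False
      define l where "l = Max (L ` P)"
      define u where "u = Min (U ` N)"
      have l1: "\<forall>p\<in>P. L p \<le> l" using finP unfolding l_def by auto
      have u1: "\<forall>q\<in>N. u \<le> U q" using finN unfolding u_def by auto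
      obtain p0 where p0: "p0 \<in> P" "L p0 = l" using finP False unfolding l_def
        by (metis (mono_tags, lifting) Max_in finite_imageI image_iff image_is_empty)
      obtain q0 where q0: "q0 \<in> N" "U q0 = u" using finN NF unfolding u_def
        by (metis (mono_tags, lifting) Min_in finite_imageI image_iff image_is_empty)
      have "G ((l + u) / 2)"
        unfolding G_def
      proof (rule conjI; intro ballI)
        fix p assume p: "p \<in> P"
        have "(s p \<longrightarrow> L p < u) \<and> L p \<le> u" using PN[OF p q0(1)] q0(2) by auto
        then show "(s p \<longrightarrow> L p < (l + u) / 2) \<and> L p \<le> (l + u) / 2" using l1 p by auto
      next
        fix q assume q: "q \<in> N"
        have "(s q \<longrightarrow> l < U q) \<and> l \<le> U q" using PN[OF p0(1) q] p0(2) by auto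
        then show "(s q \<longrightarrow> (l + u) / 2 < U q) \<and> (l + u) / 2 \<le> U q" using u1 q by auto
      qed
      then show ?thesis ..
    qed
  qed
  then obtain t where t: "G t" ..
  have "\<forall>j\<in>J. \<alpha> j \<noteq> 0 \<longrightarrow> (if s j then 0 < \<alpha> j * t + r j else 0 \<le> \<alpha> j * t + r j)"
  proof (intro ballI impI)
    fix j assume j: "j \<in> J" "\<alpha> j \<noteq> 0"
    show "if s j then 0 < \<alpha> j * t + r j else 0 \<le> \<alpha> j * t + r j"
    proof (cases "\<alpha> j > 0")
      case True
      then have "j \<in> P" using j by (auto simp: P_def)
      then show ?thesis using t Lp[OF True] by (auto simp: G_def)
    next
      case False
      then have "\<alpha> j < 0" using j by auto
      then have "j \<in> N" using j by (auto simp: N_def)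
      then show ?thesis using t Uq[OF \<open>\<alpha> j < 0\<close>] by (auto simp: G_def)
    qed
  qed
  then show ?thesis ..
qed



lemma FM: "finite X \<Longrightarrow> finite J \<Longrightarrow> \<not>(\<exists>\<mu>. sat X J \<mu>) \<Longrightarrow> \<exists>a. (a,True) \<in> deriv J \<and> (\<forall>x\<in>X. a x = 0)"
proof (induction X arbitrary: J rule: finite_induct)
  case empty
  have "\<exists>j\<in>J. snd j"
  proof (rule ccontr)
    assume "\<not> ?thesis"
    then have "sat {} J (\<lambda>_. 0)" by (auto simp: sat_def ip_def)
    with empty show False by blast
  qed
  then obtain j where "j\<in>J" "snd j" by blast
  then have "(fst j, True) \<in> deriv J" by (metis deriv.base prod.collapse)
  then show ?case by blast
next
  case (insert x0 X J)
  define comb where "comb p q = (\<lambda>x. (- fst q x0) * fst p x + fst p x0 * fst q x, snd p \<or> snd q)"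
    for p q :: "('a \<Rightarrow> int) \<times> bool"
  define J' where "J' = {j\<in>J. fst j x0 = 0} \<union> (\<lambda>(p,q). comb p q) ` ({p\<in>J. fst p x0 > 0} \<times> {q\<in>J. fst q x0 < 0})"
  have finJ': "finite J'" using insert.prems(1) by (auto simp: J'_def)
  have J'0: "\<forall>j\<in>J'. fst j x0 = 0" by (auto simp: J'_def comb_def)
  have J'd: "J' \<subseteq> deriv J"
  proof
    fix j assume "j \<in> J'"
    then consider "j \<in> J" | p q where "p \<in> J" "q \<in> J" "fst p x0 > 0" "fst q x0 < 0" "j = comb p q"
      unfolding J'_def by auto
    then show "j \<in> deriv J"
    proof cases
      case 1 then show ?thesis by (rule deriv.base)
    next
      case 2
      have "0 < - fst q x0" using 2 by simp
      from deriv_comb[OF 2(1,2) this 2(3)] show ?thesis using 2(5) by (simp add: comb_def)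
    qed
  qed
  have nosat: "\<not>(\<exists>\<mu>. sat X J' \<mu>)"
  proof
    assume "\<exists>\<mu>. sat X J' \<mu>"
    then obtain \<mu> where \<mu>: "sat X J' \<mu>" by blast
    define r where "r j = ip X (fst j) \<mu>" for j :: "('a \<Rightarrow> int) \<times> bool"
    define \<alpha> where "\<alpha> j = real_of_int (fst j x0)" for j :: "('a \<Rightarrow> int) \<times> bool"
    have "\<exists>t. \<forall>j\<in>J. \<alpha> j \<noteq> 0 \<longrightarrow> (if snd j then 0 < \<alpha> j * t + r j else 0 \<le> \<alpha> j * t + r j)"
    proof (rule choose_t[OF insert.prems(1)])
      fix p q assume pq: "p\<in>J" "q\<in>J" "\<alpha> p > 0" "\<alpha> q < 0"
      then have "comb p q \<in> J'" unfolding J'_def \<alpha>_def by force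
      with \<mu> have 1: "if snd (comb p q) then 0 < ip X (fst (comb p q)) \<mu> else 0 \<le> ip X (fst (comb p q)) \<mu>"
        unfolding sat_def by blast
      have 2: "ip X (fst (comb p q)) \<mu> = (- \<alpha> q) * r p + \<alpha> p * r q"
        by (simp add: ip_def comb_def r_def \<alpha>_def sum_distrib_left sum.distrib sum_subtractf sum_negf algebra_simps)
      show "if snd p \<or> snd q then 0 < (- \<alpha> q) * r p + \<alpha> p * r q else 0 \<le> (- \<alpha> q) * r p + \<alpha> p * r q"
        using 1 unfolding 2 by (simp add: comb_def)
    qed
    then obtain t where t: "\<forall>j\<in>J. \<alpha> j \<noteq> 0 \<longrightarrow> (if snd j then 0 < \<alpha> j * t + r j else 0 \<le> \<alpha> j * t + r j)"
      by blast
    define \<mu>' where "\<mu>' = \<mu>(x0 := t)"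
    have ipx: "ip (insert x0 X) a \<mu>' = of_int (a x0) * t + ip X a \<mu>" for a
    proof -
      have "(\<Sum>x\<in>X. of_int (a x) * \<mu>' x) = (\<Sum>x\<in>X. of_int (a x) * \<mu> x)"
        using insert.hyps(2) by (intro sum.cong) (auto simp: \<mu>'_def)
      then show ?thesis using insert.hyps by (simp add: ip_def \<mu>'_def)
    qed
    have "sat (insert x0 X) J \<mu>'"
      unfolding sat_def
    proof
      fix j assume j: "j\<in>J"
      show "if snd j then 0 < ip (insert x0 X) (fst j) \<mu>' else 0 \<le> ip (insert x0 X) (fst j) \<mu>'"
      proof (cases "fst j x0 = 0")
        case True
        then have "j \<in> J'" using j by (auto simp: J'_def)
        with \<mu> show ?thesis using True by (simp add: sat_def ipx)
      next
        case False
        then have "\<alpha> j \<noteq> 0" by (simp add: \<alpha>_def)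
        with t j have "if snd j then 0 < \<alpha> j * t + r j else 0 \<le> \<alpha> j * t + r j" by blast
        then show ?thesis unfolding ipx \<alpha>_def r_def .
      qed
    qed
    with insert.prems(2) show False by blast
  qed
  from insert.IH[OF finJ' nosat] obtain a where a: "(a,True) \<in> deriv J'" "\<forall>x\<in>X. a x = 0" by blast
  have "(a,True) \<in> deriv J" using deriv_mono[OF J'd] a(1) by blast
  moreover have "a x0 = 0" using deriv_zero[OF a(1) J'0] by simp
  ultimately show ?case using a(2) by auto
qed



lemma sum_card_swap:
  fixes \<mu> :: "'a \<Rightarrow> real"
  assumes "finite X" "\<forall>i\<in>I. C i \<subseteq> X" "finite I"
  shows "(\<Sum>i\<in>I. \<Sum>x\<in>C i. \<mu> x) = (\<Sum>x\<in>X. \<mu> x * card {i\<in>I. x \<in> C i})"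
proof -
  have "(\<Sum>i\<in>I. \<Sum>x\<in>C i. \<mu> x) = (\<Sum>i\<in>I. \<Sum>x\<in>X. if x \<in> C i then \<mu> x else 0)"
  proof (rule sum.cong)
    fix i assume "i \<in> I"
    then have "X \<inter> C i = C i" using assms by auto
    then show "(\<Sum>x\<in>C i. \<mu> x) = (\<Sum>x\<in>X. if x \<in> C i then \<mu> x else 0)"
      using sum.inter_restrict[OF assms(1), of \<mu> "C i"] by simp
  qed simp
  also have "\<dots> = (\<Sum>x\<in>X. \<Sum>i\<in>I. if x \<in> C i then \<mu> x else 0)" by (rule sum.swap)
  also have "\<dots> = (\<Sum>x\<in>X. \<mu> x * card {i\<in>I. x \<in> C i})"
  proof (rule sum.cong)
    fix x assume "x \<in> X"
    show "(\<Sum>i\<in>I. if x \<in> C i then \<mu> x else 0) = \<mu> x * card {i\<in>I. x \<in> C i}"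
      using sum.inter_filter[OF assms(3), of "\<lambda>_. \<mu> x" "\<lambda>i. x \<in> C i"] by (simp add: mult.commute)
  qed simp
  finally show ?thesis .
qed

lemma card_shift: "card {i\<in>{1..length qs}. P (qs!(i-1))} = length (filter P qs)"
proof -
  have "{i\<in>{1..length qs}. P (qs!(i-1))} = Suc ` {i. i < length qs \<and> P (qs!i)}"
  proof
    show "{i\<in>{1..length qs}. P (qs!(i-1))} \<subseteq> Suc ` {i. i < length qs \<and> P (qs!i)}"
    proof
      fix i assume "i \<in> {i\<in>{1..length qs}. P (qs!(i-1))}"
      then have "i = Suc (i-1)" "i - 1 < length qs" "P (qs!(i-1))" by auto
      then show "i \<in> Suc ` {i. i < length qs \<and> P (qs!i)}" by (metis (mono_tags) image_eqI mem_Collect_eq)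
    qed
    show "Suc ` {i. i < length qs \<and> P (qs!i)} \<subseteq> {i\<in>{1..length qs}. P (qs!(i-1))}" by auto
  qed
  then show ?thesis by (simp add: card_image length_filter_conv_card)
qed

theorem theorem3:
  fixes X :: "'a set" and \<Sigma> :: "'a set set" and Pl :: "'a set \<Rightarrow> 'd::order"
  assumes "test_space X \<Sigma>" and "finite X" and "plausibility X \<Sigma> Pl"
  shows "(\<exists>\<mu>. prob_measure X \<Sigma> \<mu> \<and> agrees_with X \<Sigma> Pl \<mu>) \<longleftrightarrow>
         ((\<forall>a\<in>Pl ` events X \<Sigma>. \<forall>b\<in>Pl ` events X \<Sigma>. a \<le> b \<or> b \<le> a) \<and> archimedean X \<Sigma> Pl)"
proof -
  let ?E = "events X \<Sigma>"
  have Esub: "\<And>A. A \<in> ?E \<Longrightarrow> A \<subseteq> X" by (simp add: events_def)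
  have finE: "finite ?E" by (rule finite_subset[of _ "Pow X"]) (auto simp: events_def assms(2))
  show ?thesis
  proof
    assume "\<exists>\<mu>. prob_measure X \<Sigma> \<mu> \<and> agrees_with X \<Sigma> Pl \<mu>"
    then obtain \<mu> where ag: "agrees_with X \<Sigma> Pl \<mu>" by blast
    have ag': "\<And>A B. A\<in>?E \<Longrightarrow> B\<in>?E \<Longrightarrow> Pl A \<le> Pl B \<longleftrightarrow> (\<Sum>x\<in>A. \<mu> x) \<le> (\<Sum>x\<in>B. \<mu> x)"
      using ag by (simp add: agrees_with_def)
    have tot: "\<forall>a\<in>Pl`?E. \<forall>b\<in>Pl`?E. a \<le> b \<or> b \<le> a"
    proof (intro ballI)
      fix a b assume "a \<in> Pl`?E" "b \<in> Pl`?E"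
      then obtain A B where "A \<in> ?E" "B \<in> ?E" "a = Pl A" "b = Pl B" by blast
      then show "a \<le> b \<or> b \<le> a" using ag'[of A B] ag'[of B A] by auto
    qed
    have arch: "archimedean X \<Sigma> Pl"
      unfolding archimedean_def
    proof (intro allI impI)
      fix n :: nat and A B :: "nat \<Rightarrow> 'a set"
      assume H: "1 \<le> n \<and> (\<forall>i\<in>{1..n}. A i \<in> ?E \<and> B i \<in> ?E) \<and>
        (\<forall>x\<in>X. card {i\<in>{1..n}. x \<in> A i} = card {i\<in>{1..n}. x \<in> B i}) \<and>
        (\<forall>i\<in>{1..<n}. Pl (A i) \<le> Pl (B i))"
      define m where "m C = (\<Sum>x\<in>C. \<mu> x)" for C
      have sA: "(\<Sum>i\<in>{1..n}. m (A i)) = (\<Sum>x\<in>X. \<mu> x * card {i\<in>{1..n}. x \<in> A i})"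
        unfolding m_def using H Esub by (intro sum_card_swap[OF assms(2)]) auto
      have sB: "(\<Sum>i\<in>{1..n}. m (B i)) = (\<Sum>x\<in>X. \<mu> x * card {i\<in>{1..n}. x \<in> B i})"
        unfolding m_def using H Esub by (intro sum_card_swap[OF assms(2)]) auto
      have eq: "(\<Sum>i\<in>{1..n}. m (A i)) = (\<Sum>i\<in>{1..n}. m (B i))"
        unfolding sA sB using H by (intro sum.cong) auto
      have ins: "{1..n} = insert n {1..<n}" using H by auto
      have le: "(\<Sum>i\<in>{1..<n}. m (A i)) \<le> (\<Sum>i\<in>{1..<n}. m (B i))"
      proof (rule sum_mono)
        fix i assume i: "i \<in> {1..<n}"
        then have "A i \<in> ?E" "B i \<in> ?E" using H by auto
        then show "m (A i) \<le> m (B i)" using ag' H i unfolding m_def by blast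
      qed
      have "m (B n) \<le> m (A n)" using eq le unfolding ins by simp
      moreover have "A n \<in> ?E" "B n \<in> ?E" using H by auto
      ultimately show "Pl (B n) \<le> Pl (A n)" using ag' unfolding m_def by blast
    qed
    show "(\<forall>a\<in>Pl`?E. \<forall>b\<in>Pl`?E. a \<le> b \<or> b \<le> a) \<and> archimedean X \<Sigma> Pl"
      using tot arch by blast
  next
    assume H: "(\<forall>a\<in>Pl`?E. \<forall>b\<in>Pl`?E. a \<le> b \<or> b \<le> a) \<and> archimedean X \<Sigma> Pl"
    have tot: "\<And>A B. A\<in>?E \<Longrightarrow> B\<in>?E \<Longrightarrow> Pl A \<le> Pl B \<or> Pl B \<le> Pl A" using H by blast
    have arch: "archimedean X \<Sigma> Pl" using H by blast
    define ind where "ind B = (\<lambda>x. if x \<in> B then 1 else 0 :: int)" for B :: "'a set"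
    define S where "S = {(A,B). A \<in> ?E \<and> B \<in> ?E \<and> Pl A \<le> Pl B}"
    define f where "f = (\<lambda>(A,B). ((\<lambda>x. ind B x - ind A x), Pl A < Pl B))"
    define J where "J = f ` S"
    have finS: "finite S" 
      by (rule finite_subset[of _ "?E \<times> ?E"]) (auto simp: S_def finE)
    have finJ: "finite J" using finS by (simp add: J_def)
    have "\<exists>\<mu>. sat X J \<mu>"
    proof (rule ccontr)
      assume ns: "\<not> (\<exists>\<mu>. sat X J \<mu>)"
      from FM[OF assms(2) finJ ns] obtain a where a: "(a,True) \<in> deriv J" "\<forall>x\<in>X. a x = 0" by blast
      from deriv_list[OF a(1)] obtain ps where ps: "ps \<noteq> []" "set ps \<subseteq> J"
        "\<forall>x. a x = (\<Sum>p\<leftarrow>ps. fst p x)" "snd (last ps)" by auto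
      obtain qs where qs: "set qs \<subseteq> S" "ps = map f qs" using list_preimage[OF ps(2)[unfolded J_def]] by blast
      define n where "n = length qs"
      define AA where "AA i = fst (qs ! (i-1))" for i
      define BB where "BB i = snd (qs ! (i-1))" for i
      have n1: "n \<ge> 1" using ps(1) qs(2) by (simp add: n_def Suc_le_eq)
      have inS: "(AA i, BB i) \<in> S" if "i\<in>{1..n}" for i
      proof -
        have "i - 1 < length qs" using that by (auto simp: n_def)
        then have "qs ! (i-1) \<in> set qs" by (rule nth_mem)
        then show ?thesis using qs(1) by (auto simp: AA_def BB_def)
      qed
      have evs: "\<forall>i\<in>{1..n}. AA i \<in> ?E \<and> BB i \<in> ?E" using inS by (auto simp: S_def)
      have les: "\<forall>i\<in>{1..<n}. Pl (AA i) \<le> Pl (BB i)" using inS by (auto simp: S_def)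
      have fstf: "fst (f q) x = ind (snd q) x - ind (fst q) x" for q x
        by (simp add: f_def split_beta)
      have cnt: "\<forall>x\<in>X. card {i\<in>{1..n}. x \<in> AA i} = card {i\<in>{1..n}. x \<in> BB i}"
      proof
        fix x assume "x \<in> X"
        then have "0 = (\<Sum>q\<leftarrow>qs. ind (snd q) x - ind (fst q) x)"
          using a(2) ps(3) qs(2) by (simp add: fstf o_def)
        also have "\<dots> = (\<Sum>q\<leftarrow>qs. ind (snd q) x) - (\<Sum>q\<leftarrow>qs. ind (fst q) x)"
          by (simp add: sum_list_subtractf)
        also have "\<dots> = int (length (filter (\<lambda>q. x \<in> snd q) qs)) - int (length (filter (\<lambda>q. x \<in> fst q) qs))"
          unfolding ind_def by (simp add: sum_ind_filter)
        finally have "length (filter (\<lambda>q. x \<in> fst q) qs) = length (filter (\<lambda>q. x \<in> snd q) qs)" by simp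
        then show "card {i\<in>{1..n}. x \<in> AA i} = card {i\<in>{1..n}. x \<in> BB i}"
          using card_shift[of qs "\<lambda>q. x \<in> fst q"] card_shift[of qs "\<lambda>q. x \<in> snd q"]
          by (simp add: AA_def BB_def n_def)
      qed
      have "Pl (BB n) \<le> Pl (AA n)"
        using arch n1 evs cnt les unfolding archimedean_def by blast
      moreover have "Pl (AA n) < Pl (BB n)"
      proof -
        have "last qs = qs ! (n-1)" using ps(1) qs(2) by (simp add: n_def last_conv_nth)
        moreover have "snd (f (last qs))" using ps(4) ps(1) qs(2) by (simp add: last_map)
        ultimately show ?thesis by (simp add: f_def split_beta AA_def BB_def)
      qed
      ultimately show False by simp
    qed
    then obtain \<mu> where \<mu>: "sat X J \<mu>" by blast
    define mm where "mm A = (\<Sum>x\<in>A. \<mu> x)" for A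
    have ipm: "ip X (\<lambda>x. ind B x - ind A x) \<mu> = mm B - mm A" if "A \<subseteq> X" "B \<subseteq> X" for A B
    proof -
      have r: "(\<Sum>x\<in>X. if x \<in> C then \<mu> x else 0) = mm C" if "C \<subseteq> X" for C
      proof -
        have "X \<inter> C = C" using that by auto
        then show ?thesis using sum.inter_restrict[OF assms(2), of \<mu> C] by (simp add: mm_def)
      qed
      have "ip X (\<lambda>x. ind B x - ind A x) \<mu> = (\<Sum>x\<in>X. (if x \<in> B then \<mu> x else 0) - (if x \<in> A then \<mu> x else 0))"
        unfolding ip_def ind_def by (intro sum.cong) auto
      also have "\<dots> = mm B - mm A" using r[OF that(1)] r[OF that(2)] by (simp add: sum_subtractf)
      finally show ?thesis .
    qed
    have cond: "if Pl A < Pl B then mm A < mm B else mm A \<le> mm B"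
      if "A \<in> ?E" "B \<in> ?E" "Pl A \<le> Pl B" for A B
    proof -
      have "f (A,B) \<in> J" using that by (auto simp: J_def S_def)
      with \<mu> have "if Pl A < Pl B then 0 < ip X (\<lambda>x. ind B x - ind A x) \<mu> else 0 \<le> ip X (\<lambda>x. ind B x - ind A x) \<mu>"
        unfolding sat_def f_def by auto
      then show ?thesis using ipm[OF Esub[OF that(1)] Esub[OF that(2)]] by (auto split: if_splits)
    qed
    have agr: "Pl A \<le> Pl B \<longleftrightarrow> mm A \<le> mm B" if "A \<in> ?E" "B \<in> ?E" for A B
    proof
      assume "Pl A \<le> Pl B" then show "mm A \<le> mm B" using cond[OF that] by (auto split: if_splits)
    next
      assume m: "mm A \<le> mm B"
      show "Pl A \<le> Pl B"
      proof (rule ccontr)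
        assume nl: "\<not> Pl A \<le> Pl B"
        then have "Pl B < Pl A" using tot[OF that] by (simp add: less_le_not_le)
        then have "mm B < mm A" using cond[OF that(2,1)] by auto
        with m show False by simp
      qed
    qed
    have lt: "mm A < mm B" if "A \<in> ?E" "B \<in> ?E" "Pl A < Pl B" for A B
    proof -
      have "Pl A \<le> Pl B" "\<not> Pl B \<le> Pl A" using that(3) by (auto simp: less_le_not_le)
      then have "mm A \<le> mm B" "\<not> mm B \<le> mm A"
        using agr[OF that(1,2)] agr[OF that(2,1)] by blast+
      then show ?thesis by linarith
    qed
    show "\<exists>\<mu>. prob_measure X \<Sigma> \<mu> \<and> agrees_with X \<Sigma> Pl \<mu>"
    proof (cases "\<Sigma> = {}")
      case True
      then have "X = {}" using assms(1) by (simp add: test_space_def)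
      have "events X \<Sigma> = {}" using True by (simp add: events_def)
      then show ?thesis using True \<open>X = {}\<close> unfolding prob_measure_def agrees_with_def by blast
    next
      case False
      then obtain T0 where T0: "T0 \<in> \<Sigma>" by blast
      have TE: "T \<in> ?E" if "T \<in> \<Sigma>" for T using that assms(1) by (auto simp: events_def test_space_def)
      have eE: "{} \<in> ?E" using T0 unfolding events_def by blast
      have pl1: "\<And>T R. T\<in>\<Sigma> \<Longrightarrow> R\<in>\<Sigma> \<Longrightarrow> Pl T = Pl R"
        and pl2: "\<And>A B. A\<in>?E \<Longrightarrow> B\<in>?E \<Longrightarrow> A \<subseteq> B \<Longrightarrow> Pl A \<le> Pl B"
        and pl3: "\<And>T. T\<in>\<Sigma> \<Longrightarrow> Pl {} < Pl T"
        using assms(3) unfolding plausibility_def by blast+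
      define c where "c = mm T0"
      have "mm {} < mm T0" using lt[OF eE TE[OF T0] pl3[OF T0]] .
      then have c0: "0 < c" by (simp add: c_def mm_def)
      have cT: "mm T = c" if "T \<in> \<Sigma>" for T
      proof -
        have "Pl T \<le> Pl T0" "Pl T0 \<le> Pl T" using pl1[OF that T0] by simp_all
        then have "mm T \<le> mm T0" "mm T0 \<le> mm T"
          using agr[OF TE[OF that] TE[OF T0]] agr[OF TE[OF T0] TE[OF that]] by blast+
        then show ?thesis by (simp add: c_def)
      qed
      have nn: "0 \<le> \<mu> x" if xX: "x \<in> X" for x
      proof -
        obtain T where T: "T \<in> \<Sigma>" "x \<in> T" using xX assms(1) unfolding test_space_def by blast
        then have xE: "{x} \<in> ?E" using assms(1) unfolding events_def test_space_def by blast
        have "Pl {} \<le> Pl {x}" using pl2[OF eE xE] by simp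
        then have "mm {} \<le> mm {x}" using agr[OF eE xE] by blast
        then show ?thesis by (simp add: mm_def)
      qed
      define \<nu> where "\<nu> x = \<mu> x / c" for x
      have sn: "(\<Sum>x\<in>A. \<nu> x) = mm A / c" for A by (simp add: \<nu>_def mm_def sum_divide_distrib)
      have dv: "mm A / c \<le> mm B / c \<longleftrightarrow> mm A \<le> mm B" for A B
        using c0 by (simp add: divide_le_cancel)
      have "prob_measure X \<Sigma> \<nu>"
        unfolding prob_measure_def sn
      proof (intro conjI ballI)
        fix x assume "x \<in> X" then show "0 \<le> \<nu> x" using nn c0 by (simp add: \<nu>_def)
      next
        fix T assume "T \<in> \<Sigma>" then show "mm T / c = 1" using cT c0 by simp
      qed
      moreover have "agrees_with X \<Sigma> Pl \<nu>"
        unfolding agrees_with_def sn dv using agr by blast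
      ultimately show ?thesis by blast
    qed
  qed
qed

end
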